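(* Let $G$ be an ADMG on $n$ vertices, and suppose there are $m$ distinct vertex subsets $V_1,\dots,V_m$ with $|V_i|=3$ such that for each $i$ the vertices of $V_i$ can be ordered as $(a_i,b_i,c_i)$ so that $G$ contains the edges $a_i\to b_i$, $b_i\to c_i$ and $b_i\leftrightarrow c_i$. Then $|\mathrm{MEC}(G)|\ge 2^{m/(3n)}$.
   Context: An ADMG (acyclic directed mixed graph) has directed edges $v\to w$ forming no directed cycle and bidirected edges $v\leftrightarrow w$, $v\ne w$. Markov equivalence is defined via d-separation: a path between $a\ne b$ is a sequence of vertices (repeats allowed) with specified edges (directed either way, or bidirected) between consecutive ones; an internal vertex is a collider if both adjacent path-edges have an arrowhead at it; the path is active given $Z$ if every internal non-collider is outside $Z$ and every collider is in $Z$ or has a descendant (itself or a vertex reachable by a directed path) in $Z$; $a,b$ are d-separated given $Z$ if no active path exists. Two graphs are Markov equivalent if they have the same d-separations. $\mathrm{MEC}(G)$ is the set of ADMGs on the same vertex set Markov equivalent to $G$. *)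

theory Defs
  imports Complex_Main
begin

text \<open>An ADMG on vertex set V is a pair (D, B): D the directed edges (u,w) meaning u \<rightarrow> w,
  B the bidirected edges, stored as a symmetric irreflexive relation ((u,w) \<in> B means u \<leftrightarrow> w).\<close>

type_synonym 'v admg = "('v \<times> 'v) set \<times> ('v \<times> 'v) set"

definition is_admg :: "'v set \<Rightarrow> 'v admg \<Rightarrow> bool" where
  "is_admg V G \<longleftrightarrow> fst G \<subseteq> V \<times> V \<and> snd G \<subseteq> V \<times> V \<and> acyclic (fst G)
     \<and> sym (snd G) \<and> irrefl (snd G)"

datatype ekind = Fwd | Bwd | Bid

fun edge_ok :: "'v admg \<Rightarrow> ekind \<Rightarrow> 'v \<Rightarrow> 'v \<Rightarrow> bool" where
  "edge_ok G Fwd x y = ((x, y) \<in> fst G)"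
| "edge_ok G Bwd x y = ((y, x) \<in> fst G)"
| "edge_ok G Bid x y = ((x, y) \<in> snd G)"

fun head_at_target :: "ekind \<Rightarrow> bool" where
  "head_at_target Fwd = True" | "head_at_target Bwd = False" | "head_at_target Bid = True"

fun head_at_source :: "ekind \<Rightarrow> bool" where
  "head_at_source Fwd = False" | "head_at_source Bwd = True" | "head_at_source Bid = True"

text \<open>A path: vertex list vs (repeats allowed) and edge list ks with length ks = length vs - 1,
  ks!i being an edge of G between vs!i and vs!(i+1).\<close>

definition is_path :: "'v admg \<Rightarrow> 'v list \<Rightarrow> ekind list \<Rightarrow> bool" where
  "is_path G vs ks \<longleftrightarrow> vs \<noteq> [] \<and> length ks = length vs - 1 \<and>
     (\<forall>i < length ks. edge_ok G (ks ! i) (vs ! i) (vs ! Suc i))"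

definition is_collider :: "ekind list \<Rightarrow> nat \<Rightarrow> bool" where
  "is_collider ks i \<longleftrightarrow> head_at_target (ks ! (i - 1)) \<and> head_at_source (ks ! i)"

definition has_desc_in :: "'v admg \<Rightarrow> 'v \<Rightarrow> 'v set \<Rightarrow> bool" where
  "has_desc_in G c Z \<longleftrightarrow> (\<exists>z \<in> Z. (c, z) \<in> (fst G)\<^sup>*)"

definition active_path :: "'v admg \<Rightarrow> 'v set \<Rightarrow> 'v list \<Rightarrow> ekind list \<Rightarrow> bool" where
  "active_path G Z vs ks \<longleftrightarrow> is_path G vs ks \<and>
     (\<forall>i. 0 < i \<and> i < length ks \<longrightarrow>
        (if is_collider ks i then has_desc_in G (vs ! i) Z else vs ! i \<notin> Z))"

definition d_separated :: "'v admg \<Rightarrow> 'v \<Rightarrow> 'v \<Rightarrow> 'v set \<Rightarrow> bool" where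
  "d_separated G a b Z \<longleftrightarrow>
     \<not> (\<exists>vs ks. active_path G Z vs ks \<and> hd vs = a \<and> last vs = b)"

definition markov_equiv :: "'v set \<Rightarrow> 'v admg \<Rightarrow> 'v admg \<Rightarrow> bool" where
  "markov_equiv V G H \<longleftrightarrow>
     (\<forall>a \<in> V. \<forall>b \<in> V. \<forall>Z. a \<noteq> b \<longrightarrow> Z \<subseteq> V \<longrightarrow>
        (d_separated G a b Z \<longleftrightarrow> d_separated H a b Z))"

definition MEC :: "'v set \<Rightarrow> 'v admg \<Rightarrow> 'v admg set" where
  "MEC V G = {H. is_admg V H \<and> markov_equiv V G H}"

end

theory Submission
  imports Defs
begin

definition jn :: "'v admg \<Rightarrow> 'v set \<Rightarrow> 'v \<Rightarrow> bool \<Rightarrow> bool \<Rightarrow> bool" where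
  "jn G Z y h1 h2 = (if h1 \<and> h2 then has_desc_in G y Z else y \<notin> Z)"

inductive conn :: "'v admg \<Rightarrow> 'v set \<Rightarrow> 'v \<Rightarrow> 'v \<Rightarrow> bool \<Rightarrow> bool \<Rightarrow> bool" for G Z where
  c1: "edge_ok G k x y \<Longrightarrow> conn G Z x y (head_at_source k) (head_at_target k)"
| c2: "conn G Z x y hs h1 \<Longrightarrow> edge_ok G k y z \<Longrightarrow> jn G Z y h1 (head_at_source k)
       \<Longrightarrow> conn G Z x z hs (head_at_target k)"

lemma conn_to_path:
  assumes "conn G Z x y hs ht"
  shows "\<exists>vs ks. active_path G Z vs ks \<and> hd vs = x \<and> last vs = y \<and> ks \<noteq> [] \<and>
           head_at_source (hd ks) = hs \<and> head_at_target (last ks) = ht"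
  using assms
proof induction
  case (c1 k x y)
  have "active_path G Z [x, y] [k]"
    using c1 by (auto simp: active_path_def is_path_def)
  then show ?case by fastforce
next
  case (c2 x y hs h1 k z)
  then obtain vs ks where P: "active_path G Z vs ks" "hd vs = x" "last vs = y" "ks \<noteq> []"
    "head_at_source (hd ks) = hs" "head_at_target (last ks) = h1" by blast
  have len: "length vs = Suc (length ks)" and ne: "vs \<noteq> []"
    using P(1) P(4) by (auto simp: active_path_def is_path_def)
  have lastv: "vs ! length ks = y" using P(3) len ne by (simp add: last_conv_nth)
  have ip: "is_path G (vs @ [z]) (ks @ [k])"
    unfolding is_path_def
  proof (intro conjI allI impI)
    fix i assume i: "i < length (ks @ [k])"
    show "edge_ok G ((ks @ [k]) ! i) ((vs @ [z]) ! i) ((vs @ [z]) ! Suc i)"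
    proof (cases "i < length ks")
      case True
      then have "edge_ok G (ks ! i) (vs ! i) (vs ! Suc i)" using P(1) by (auto simp: active_path_def is_path_def)
      then show ?thesis using True len by (simp add: nth_append)
    next
      case False
      then have "i = length ks" using i by simp
      then show ?thesis using len lastv c2(2) by (simp add: nth_append)
    qed
  qed (use len in auto)
  have "active_path G Z (vs @ [z]) (ks @ [k])"
    unfolding active_path_def
  proof (intro conjI allI impI ip)
    fix i assume i: "0 < i \<and> i < length (ks @ [k])"
    show "if is_collider (ks @ [k]) i then has_desc_in G ((vs @ [z]) ! i) Z else (vs @ [z]) ! i \<notin> Z"
    proof (cases "i < length ks")
      case True
      then have "if is_collider ks i then has_desc_in G (vs ! i) Z else vs ! i \<notin> Z"
        using P(1) i by (auto simp: active_path_def)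
      moreover have "is_collider (ks @ [k]) i = is_collider ks i"
        using True i by (auto simp: is_collider_def nth_append)
      ultimately show ?thesis using True len by (simp add: nth_append)
    next
      case False
      then have ii: "i = length ks" using i by simp
      have "is_collider (ks @ [k]) i = (h1 \<and> head_at_source k)"
        using ii P(4) P(6) by (simp add: is_collider_def nth_append last_conv_nth)
      then show ?thesis using ii len lastv c2(3) by (simp add: nth_append jn_def)
    qed
  qed
  moreover have "hd (vs @ [z]) = x" using P ne by simp
  moreover have "head_at_source (hd (ks @ [k])) = hs" using P by simp
  ultimately show ?case by fastforce
qed

lemma path_to_conn:
  assumes "active_path G Z vs ks" "ks \<noteq> []"
  shows "conn G Z (hd vs) (last vs) (head_at_source (hd ks)) (head_at_target (last ks))"
  using assms
proof (induction ks arbitrary: vs rule: rev_induct)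
  case Nil
  then show ?case by simp
next
  case (snoc k ks)
  have len: "length vs = Suc (Suc (length ks))" and ne: "vs \<noteq> []"
    using snoc.prems by (auto simp: active_path_def is_path_def)
  obtain vs0 v where vs: "vs = vs0 @ [v]" using ne by (metis rev_exhaust)
  have len0: "length vs0 = Suc (length ks)" using len vs by simp
  have ek: "edge_ok G k (vs0 ! length ks) v"
    using snoc.prems(1) len0 unfolding active_path_def is_path_def vs
    by (metis (no_types, lifting) length_append_singleton lessI nth_append_length nth_append_left)
  show ?case
  proof (cases "ks = []")
    case True
    then have "vs0 = [vs0 ! 0]" using len0 by (cases vs0) auto
    then have "vs = [vs0 ! 0, v]" using vs by (metis append_Cons append_Nil)
    then show ?thesis using ek True c1[of G k "vs0 ! 0" v Z] by simp
  next
    case False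
    have ap: "active_path G Z vs0 ks"
      unfolding active_path_def is_path_def
    proof (intro conjI allI impI)
      show "vs0 \<noteq> []" "length ks = length vs0 - 1" using len0 by auto
    next
      fix i assume i: "i < length ks"
      have "edge_ok G ((ks@[k]) ! i) (vs ! i) (vs ! Suc i)"
        using snoc.prems(1) i by (auto simp: active_path_def is_path_def)
      then show "edge_ok G (ks ! i) (vs0 ! i) (vs0 ! Suc i)" using i len0 vs by (simp add: nth_append)
    next
      fix i assume i: "0 < i \<and> i < length ks"
      have "if is_collider (ks@[k]) i then has_desc_in G (vs ! i) Z else vs ! i \<notin> Z"
        using snoc.prems(1) i by (auto simp: active_path_def)
      moreover have "is_collider (ks @ [k]) i = is_collider ks i"
        using i by (auto simp: is_collider_def nth_append)
      moreover have "vs ! i = vs0 ! i" using i len0 vs by (simp add: nth_append)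
      ultimately show "if is_collider ks i then has_desc_in G (vs0 ! i) Z else vs0 ! i \<notin> Z"
        by (auto split: if_splits)
    qed
    have IH: "conn G Z (hd vs0) (last vs0) (head_at_source (hd ks)) (head_at_target (last ks))"
      using snoc.IH[OF ap False] .
    have lv: "last vs0 = vs0 ! length ks" using len0 by (metis diff_Suc_1 last_conv_nth list.size(3) nat.distinct(1))
    have "if is_collider (ks@[k]) (length ks) then has_desc_in G (vs ! length ks) Z else vs ! length ks \<notin> Z"
      using snoc.prems(1) False by (auto simp: active_path_def)
    moreover have "is_collider (ks @ [k]) (length ks) = (head_at_target (last ks) \<and> head_at_source k)"
      using False by (simp add: is_collider_def nth_append last_conv_nth)
    moreover have "vs ! length ks = last vs0" using lv len0 vs by (simp add: nth_append)
    ultimately have J: "jn G Z (last vs0) (head_at_target (last ks)) (head_at_source k)"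
      unfolding jn_def by (auto split: if_splits)
    have "conn G Z (hd vs0) v (head_at_source (hd ks)) (head_at_target k)"
      using c2[OF IH _ J] ek lv by simp
    then show ?thesis using vs False len0 by (cases vs0) auto
  qed
qed


lemma conn_cat:
  assumes "conn G Z y z h2 ht" "conn G Z x y hs h1" "jn G Z y h1 h2"
  shows "conn G Z x z hs ht"
  using assms
proof (induction arbitrary: x hs h1 rule: conn.induct)
  case (c1 k y z)
  then show ?case by (intro conn.c2) auto
next
  case (c2 y w h2 h1' k z)
  then show ?case by (metis conn.c2)
qed

fun rk :: "ekind \<Rightarrow> ekind" where
  "rk Fwd = Bwd" | "rk Bwd = Fwd" | "rk Bid = Bid"

lemma edge_rev: "sym (snd G) \<Longrightarrow> edge_ok G k x y \<Longrightarrow> edge_ok G (rk k) y x"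
  by (cases k) (auto dest: symD)

lemma rk_heads: "head_at_source (rk k) = head_at_target k" "head_at_target (rk k) = head_at_source k"
  by (cases k; simp)+

lemma jn_comm: "jn G Z y a b = jn G Z y b a"
  unfolding jn_def by auto

lemma conn_rev:
  assumes "sym (snd G)" "conn G Z x y hs ht"
  shows "conn G Z y x ht hs"
  using assms(2)
proof induction
  case (c1 k x y)
  then show ?case using conn.c1[OF edge_rev[OF assms(1) c1]] by (simp add: rk_heads)
next
  case (c2 x y hs h1 k z)
  have "conn G Z z y (head_at_target k) (head_at_source k)"
    using conn.c1[OF edge_rev[OF assms(1) c2(2)]] by (simp add: rk_heads)
  then show ?case using conn_cat[OF c2(4)] c2(3) jn_comm by metis
qed

lemma jn_cong: "(fst G)\<^sup>* = (fst H)\<^sup>* \<Longrightarrow> jn G = jn H"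
  by (simp add: fun_eq_iff jn_def has_desc_in_def)

lemma conn_mono:
  assumes "fst G \<subseteq> fst H" "snd G \<subseteq> snd H" "(fst G)\<^sup>* = (fst H)\<^sup>*" "conn G Z x y hs ht"
  shows "conn H Z x y hs ht"
  using assms(4)
proof induction
  case (c1 k x y)
  then have "edge_ok H k x y" using assms(1,2) by (cases k) auto
  then show ?case by (rule conn.c1)
next
  case (c2 x y hs h1 k z)
  then have "edge_ok H k y z" using assms(1,2) by (cases k) auto
  moreover have "jn H Z y h1 (head_at_source k)" using c2(3) jn_cong[OF assms(3)] by simp
  ultimately show ?case using c2 conn.c2 by metis
qed

lemma dsep_conn:
  assumes "a \<noteq> b"
  shows "d_separated G a b Z \<longleftrightarrow> \<not> (\<exists>hs ht. conn G Z a b hs ht)"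
proof
  assume d: "d_separated G a b Z"
  show "\<not> (\<exists>hs ht. conn G Z a b hs ht)"
  proof
    assume "\<exists>hs ht. conn G Z a b hs ht"
    then obtain hs ht where "conn G Z a b hs ht" by blast
    from conn_to_path[OF this] d show False unfolding d_separated_def by blast
  qed
next
  assume n: "\<not> (\<exists>hs ht. conn G Z a b hs ht)"
  show "d_separated G a b Z"
    unfolding d_separated_def
  proof
    assume "\<exists>vs ks. active_path G Z vs ks \<and> hd vs = a \<and> last vs = b"
    then obtain vs ks where P: "active_path G Z vs ks" "hd vs = a" "last vs = b" by blast
    have "ks \<noteq> []"
    proof
      assume "ks = []"
      then have "length vs = 1" using P(1) by (cases vs) (auto simp: active_path_def is_path_def)
      then have "hd vs = last vs" by (cases vs) auto
      then show False using P assms by simp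
    qed
    from path_to_conn[OF P(1) this] P n show False by auto
  qed
qed

locale red =
  fixes D0 D' :: "('v \<times> 'v) set" and B :: "('v \<times> 'v) set"
  assumes fin: "finite D'" and acyc: "acyclic D'" and sub: "D0 \<subseteq> D'"
    and wit: "\<And>x y. (x, y) \<in> D' \<Longrightarrow> (x, y) \<notin> D0 \<Longrightarrow> \<exists>b. (x, b) \<in> D' \<and> (b, y) \<in> D' \<and> (b, y) \<in> B"
begin

definition R where "R = inv_image (D'\<^sup>+ <*lex*> (D'\<^sup>+)\<inverse>) (\<lambda>(x, y). (y, x))"

lemma wfR: "wf R"
proof -
  have "wf (D'\<^sup>+)" by (rule wf_trancl[OF finite_acyclic_wf[OF fin acyc]])
  moreover have "wf ((D'\<^sup>+)\<inverse>)"
    using wf_trancl[OF finite_acyclic_wf_converse[OF fin acyc]] by (simp add: trancl_converse)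
  ultimately show ?thesis unfolding R_def by (intro wf_inv_image wf_lex_prod)
qed

lemma connector:
  "(x, y) \<in> D' \<Longrightarrow> (x, y) \<in> D0\<^sup>+ \<and> (\<forall>Z. conn (D0, B) Z x y False True)"
proof (induction "(x, y)" arbitrary: x y rule: wf_induct_rule[OF wfR])
  case 1
  show ?case
  proof (cases "(x, y) \<in> D0")
    case True
    then show ?thesis using conn.c1[of "(D0, B)" Fwd x y] by auto
  next
    case False
    then obtain b where b: "(x, b) \<in> D'" "(b, y) \<in> D'" "(b, y) \<in> B" using wit 1(2) by blast
    have "((x, b), (x, y)) \<in> R" using b unfolding R_def by auto
    then have IH1: "(x, b) \<in> D0\<^sup>+ \<and> (\<forall>Z. conn (D0, B) Z x b False True)" using 1(1) b(1) by blast
    have "((b, y), (x, y)) \<in> R" using 1(2) b unfolding R_def by auto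
    then have IH2: "(b, y) \<in> D0\<^sup>+ \<and> (\<forall>Z. conn (D0, B) Z b y False True)" using 1(1) b(2) by blast
    have "conn (D0, B) Z x y False True" for Z
    proof (cases "b \<in> Z")
      case True
      have c: "conn (D0, B) Z b y True True" using conn.c1[of "(D0, B)" Bid b y Z] b(3) by simp
      have j: "jn (D0, B) Z b True True" using True by (auto simp: jn_def has_desc_in_def)
      have "conn (D0, B) Z x b False True" using IH1 by blast
      from conn_cat[OF c this j] show ?thesis .
    next
      case False
      then have "jn (D0, B) Z b True False" by (simp add: jn_def)
      moreover have "conn (D0, B) Z x b False True" "conn (D0, B) Z b y False True" using IH1 IH2 by blast+
      ultimately show ?thesis using conn_cat by metis
    qed
    then show ?thesis using IH1 IH2 by auto
  qed
qed

lemma rt_eq: "D0\<^sup>* = D'\<^sup>*"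
proof
  show "D0\<^sup>* \<subseteq> D'\<^sup>*" using sub by (rule rtrancl_mono)
  have "D' \<subseteq> D0\<^sup>*"
  proof (rule subrelI)
    fix a b assume "(a, b) \<in> D'"
    then show "(a, b) \<in> D0\<^sup>*" using connector by (blast intro: trancl_into_rtrancl)
  qed
  then show "D'\<^sup>* \<subseteq> D0\<^sup>*" by (rule rtrancl_subset_rtrancl)
qed

lemma edge_red:
  assumes "sym B" "edge_ok (D', B) k y z"
  shows "conn (D0, B) Z y z (head_at_source k) (head_at_target k)"
proof (cases k)
  case Fwd
  then show ?thesis using assms connector conn.c1[of "(D0, B)" k y z] by (cases "(y, z) \<in> D0") auto
next
  case Bwd
  show ?thesis
  proof (cases "(z, y) \<in> D0")
    case True
    then show ?thesis using Bwd conn.c1[of "(D0, B)" k y z] by auto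
  next
    case False
    have "conn (D0, B) Z z y False True" using connector assms(2) Bwd by auto
    then show ?thesis using conn_rev[of "(D0, B)"] assms(1) Bwd by auto
  qed
next
  case Bid
  then show ?thesis using assms conn.c1[of "(D0, B)" k y z] by auto
qed

lemma conn_red:
  assumes "sym B" "conn (D', B) Z x y hs ht"
  shows "conn (D0, B) Z x y hs ht"
  using assms(2)
proof induction
  case (c1 k x y)
  then show ?case using edge_red[OF assms(1)] by blast
next
  case (c2 x y hs h1 k z)
  have "jn (D0, B) Z y h1 (head_at_source k)" using c2(3) jn_cong[of "(D0, B)" "(D', B)"] rt_eq by simp
  then show ?case using conn_cat[OF edge_red[OF assms(1) c2(2)] c2(4)] by blast
qed

lemma equiv:
  assumes "sym B" "D0 \<subseteq> D1" "D1 \<subseteq> D'"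
  shows "markov_equiv V (D1, B) (D', B)"
proof -
  have r1: "D1\<^sup>* = D'\<^sup>*" using rt_eq rtrancl_mono[OF assms(2)] rtrancl_mono[OF assms(3)] by blast
  have r0: "D0\<^sup>* = D1\<^sup>*" using r1 rt_eq by simp
  have "conn (D1, B) Z a b hs ht \<longleftrightarrow> conn (D', B) Z a b hs ht" for Z a b hs ht
  proof
    assume "conn (D1, B) Z a b hs ht"
    then show "conn (D', B) Z a b hs ht" using conn_mono[of "(D1, B)" "(D', B)"] r1 assms by auto
  next
    assume "conn (D', B) Z a b hs ht"
    then have "conn (D0, B) Z a b hs ht" using conn_red assms(1) by blast
    then show "conn (D1, B) Z a b hs ht" using conn_mono[of "(D0, B)" "(D1, B)"] r0 assms by auto
  qed
  then show ?thesis unfolding markov_equiv_def using dsep_conn by metis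
qed

end


theorem mainTheorem10:
  fixes V :: "'v set" and G :: "'v admg" and m :: nat and T :: "nat \<Rightarrow> 'v set"
  assumes "finite V"
    and "is_admg V G"
    and "inj_on T {..<m}"
    and "\<forall>i < m. T i \<subseteq> V \<and> card (T i) = 3 \<and>
           (\<exists>a b c. T i = {a, b, c} \<and> (a, b) \<in> fst G \<and> (b, c) \<in> fst G \<and> (b, c) \<in> snd G)"
  shows "real (card (MEC V G)) \<ge> 2 powr (real m / (3 * real (card V)))"
proof -
  define D where "D = fst G"
  define Bs where "Bs = snd G"
  have G: "G = (D, Bs)" by (simp add: D_def Bs_def)
  have "\<forall>i\<in>{..<m}. \<exists>t. T i = {fst t, fst (snd t), snd (snd t)} \<and> (fst t, fst (snd t)) \<in> D
      \<and> (fst (snd t), snd (snd t)) \<in> D \<and> (fst (snd t), snd (snd t)) \<in> Bs"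
    using assms(4) unfolding D_def Bs_def by fastforce
  then obtain f where f: "\<forall>i\<in>{..<m}. T i = {fst (f i), fst (snd (f i)), snd (snd (f i))} \<and> (fst (f i), fst (snd (f i))) \<in> D
      \<and> (fst (snd (f i)), snd (snd (f i))) \<in> D \<and> (fst (snd (f i)), snd (snd (f i))) \<in> Bs"
    by (rule bchoice[elim_format]) blast
  define A where "A i = fst (f i)" for i
  define Bf where "Bf i = fst (snd (f i))" for i
  define C where "C i = snd (snd (f i))" for i
  have ABC: "\<And>i. i < m \<Longrightarrow> T i = {A i, Bf i, C i} \<and> (A i, Bf i) \<in> D \<and> (Bf i, C i) \<in> D \<and> (Bf i, C i) \<in> Bs"
    using f unfolding A_def Bf_def C_def by auto
  have TV: "\<And>i. i < m \<Longrightarrow> T i \<subseteq> V" using assms(4) by auto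
  define Q where "Q = (\<lambda>i. (A i, C i)) ` {..<m}"
  define D' where "D' = D \<union> Q"
  define D0 where "D0 = D - Q"
  have adm: "D \<subseteq> V \<times> V" "Bs \<subseteq> V \<times> V" "acyclic D" "sym Bs" "irrefl Bs"
    using assms(2) unfolding is_admg_def D_def Bs_def by auto
  have QV: "Q \<subseteq> V \<times> V" using TV ABC unfolding Q_def by fastforce
  have QD: "Q \<subseteq> D\<^sup>+" unfolding Q_def by (auto dest!: ABC intro: trancl_into_trancl2 r_into_trancl)
  have finQ: "finite Q" unfolding Q_def by simp
  have D'V: "D' \<subseteq> V \<times> V" using QV adm unfolding D'_def by auto
  have finD': "finite D'" using D'V assms(1) finite_subset by blast
  have "D' \<subseteq> D\<^sup>+" using QD unfolding D'_def by auto
  then have "D'\<^sup>+ \<subseteq> D\<^sup>+" by (metis trancl_id trancl_mono trans_trancl subsetI)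
  then have acD': "acyclic D'" using adm(3) unfolding acyclic_def by blast
  interpret red D0 D' Bs
  proof
    show "finite D'" "acyclic D'" "D0 \<subseteq> D'" using finD' acD' by (auto simp: D0_def D'_def)
  next
    fix x y assume "(x, y) \<in> D'" "(x, y) \<notin> D0"
    then have "(x, y) \<in> Q" unfolding D'_def D0_def by auto
    then obtain i where "i < m" "x = A i" "y = C i" unfolding Q_def by auto
    then show "\<exists>b. (x, b) \<in> D' \<and> (b, y) \<in> D' \<and> (b, y) \<in> Bs" using ABC unfolding D'_def by blast
  qed
  define H where "H S = (D0 \<union> S, Bs)" for S
  have eqG: "markov_equiv V G (D', Bs)" unfolding G
    by (rule equiv) (use adm in \<open>auto simp: D0_def D'_def\<close>)
  have inMEC: "H S \<in> MEC V G" if S: "S \<subseteq> Q" for S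
  proof -
    have e: "markov_equiv V (H S) (D', Bs)" unfolding H_def
      by (rule equiv) (use adm S in \<open>auto simp: D0_def D'_def\<close>)
    have "markov_equiv V G (H S)" using e eqG unfolding markov_equiv_def by blast
    moreover have "is_admg V (H S)" unfolding is_admg_def H_def
      using adm S QV acD' acyclic_subset[of D' "D0 \<union> S"] by (auto simp: D0_def D'_def)
    ultimately show ?thesis unfolding MEC_def by simp
  qed
  have injH: "inj_on H (Pow Q)"
  proof (rule inj_onI)
    fix S1 S2 assume "S1 \<in> Pow Q" "S2 \<in> Pow Q" "H S1 = H S2"
    then have "(D0 \<union> S1) \<inter> Q = (D0 \<union> S2) \<inter> Q" "S1 \<subseteq> Q" "S2 \<subseteq> Q" unfolding H_def by auto
    then show "S1 = S2" unfolding D0_def by blast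
  qed
  have finMEC: "finite (MEC V G)"
  proof (rule finite_subset)
    show "MEC V G \<subseteq> Pow (V \<times> V) \<times> Pow (V \<times> V)" unfolding MEC_def is_admg_def by auto
    show "finite (Pow (V \<times> V) \<times> Pow (V \<times> V))" using assms(1) by simp
  qed
  have "card (Pow Q) \<le> card (MEC V G)"
    using card_inj_on_le[OF injH _ finMEC] inMEC by blast
  then have cM: "2 ^ card Q \<le> card (MEC V G)" using card_Pow[OF finQ] by simp
  have "card {..<m} \<le> card (Q \<times> V)"
  proof (rule card_inj_on_le)
    show "inj_on (\<lambda>i. ((A i, C i), Bf i)) {..<m}"
    proof (rule inj_onI)
      fix i j assume "i \<in> {..<m}" "j \<in> {..<m}" "((A i, C i), Bf i) = ((A j, C j), Bf j)"
      then have "T i = T j" using ABC by auto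
      then show "i = j" using assms(3) \<open>i \<in> {..<m}\<close> \<open>j \<in> {..<m}\<close> inj_onD by metis
    qed
    show "(\<lambda>i. ((A i, C i), Bf i)) ` {..<m} \<subseteq> Q \<times> V" using ABC TV unfolding Q_def by fastforce
    show "finite (Q \<times> V)" using finQ assms(1) by simp
  qed
  then have mle: "m \<le> card Q * card V" by (simp add: card_cartesian_product)
  have le: "real m / (3 * real (card V)) \<le> real (card Q)"
  proof (cases "card V = 0")
    case True then show ?thesis by simp
  next
    case False
    have "real m \<le> real (card Q) * real (card V)" using mle by (metis of_nat_le_iff of_nat_mult)
    also have "\<dots> \<le> real (card Q) * (3 * real (card V))" by simp
    finally show ?thesis using False by (simp add: divide_le_eq)
  qed
  have "2 powr (real m / (3 * real (card V))) \<le> 2 powr real (card Q)"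
    using le by (intro powr_mono) auto
  also have "\<dots> = 2 ^ card Q" by (simp add: powr_realpow)
  also have "\<dots> \<le> real (card (MEC V G))" using cM by (metis numeral_power_le_of_nat_cancel_iff)
  finally show ?thesis .
qed

end
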